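(* A reaction network $(X,\mathscr{R})$ admits an sf-instance if and only if it is conservative.
   Context: A reaction network (RN) $(X,\mathscr{R})$ consists of a finite non-empty set $X$ of species and a finite non-empty set $\mathscr{R}$ of reactions. Each reaction $r$ is given by stoichiometric coefficients $s^-_{xr},s^+_{xr}\in\mathbb{N}_0$. The stoichiometric matrix $S\in\mathbb{Z}^{X\times\mathscr{R}}$ has entries $S_{xr}=s^+_{xr}-s^-_{xr}$. The paper assumes throughout that RNs are closed: every reaction $r$ has $x,y$ with $S_{xr}<0<S_{yr}$. The RN is conservative if there is $m\in\mathbb{R}^X$ with all entries positive and $m^\top S=0$. A sum formula instance (sf-instance) is a matrix $A\in\mathbb{N}_0^{\mathcal{A}\times X}$, for some non-empty finite set $\mathcal{A}$ of "atoms", such that: - (i) every column of $A$ is nonzero; - (ii) $AS=0$. *)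

theory Defs
  imports Complex_Main
begin

text \<open>A reaction network: species set X, reaction set R (both finite, non-empty),
  stoichiometric coefficients sm (reactant side) and sp (product side).\<close>

definition stoich :: "('x \<Rightarrow> 'r \<Rightarrow> nat) \<Rightarrow> ('x \<Rightarrow> 'r \<Rightarrow> nat) \<Rightarrow> 'x \<Rightarrow> 'r \<Rightarrow> int" where
  "stoich sm sp x r = int (sp x r) - int (sm x r)"

definition reaction_network :: "'x set \<Rightarrow> 'r set \<Rightarrow> bool" where
  "reaction_network X R \<longleftrightarrow> finite X \<and> X \<noteq> {} \<and> finite R \<and> R \<noteq> {}"

definition closed_RN :: "'x set \<Rightarrow> 'r set \<Rightarrow> ('x \<Rightarrow> 'r \<Rightarrow> nat) \<Rightarrow> ('x \<Rightarrow> 'r \<Rightarrow> nat) \<Rightarrow> bool" where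
  "closed_RN X R sm sp \<longleftrightarrow>
     (\<forall>r\<in>R. \<exists>x\<in>X. \<exists>y\<in>X. stoich sm sp x r < 0 \<and> 0 < stoich sm sp y r)"

definition conservative :: "'x set \<Rightarrow> 'r set \<Rightarrow> ('x \<Rightarrow> 'r \<Rightarrow> nat) \<Rightarrow> ('x \<Rightarrow> 'r \<Rightarrow> nat) \<Rightarrow> bool" where
  "conservative X R sm sp \<longleftrightarrow>
     (\<exists>m :: 'x \<Rightarrow> real. (\<forall>x\<in>X. 0 < m x) \<and>
        (\<forall>r\<in>R. (\<Sum>x\<in>X. m x * of_int (stoich sm sp x r)) = 0))"

definition sf_instance :: "'x set \<Rightarrow> 'r set \<Rightarrow> ('x \<Rightarrow> 'r \<Rightarrow> nat) \<Rightarrow> ('x \<Rightarrow> 'r \<Rightarrow> nat)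
    \<Rightarrow> 'a set \<Rightarrow> ('a \<Rightarrow> 'x \<Rightarrow> nat) \<Rightarrow> bool" where
  "sf_instance X R sm sp Atoms A \<longleftrightarrow>
     finite Atoms \<and> Atoms \<noteq> {} \<and>
     (\<forall>x\<in>X. \<exists>a\<in>Atoms. A a x \<noteq> 0) \<and>
     (\<forall>a\<in>Atoms. \<forall>r\<in>R. (\<Sum>x\<in>X. int (A a x) * stoich sm sp x r) = 0)"

text \<open>Admitting an sf-instance; atoms are taken from nat (any finite atom set can be
  relabelled injectively into nat).\<close>

definition admits_sf_instance :: "'x set \<Rightarrow> 'r set \<Rightarrow> ('x \<Rightarrow> 'r \<Rightarrow> nat) \<Rightarrow> ('x \<Rightarrow> 'r \<Rightarrow> nat) \<Rightarrow> bool" where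
  "admits_sf_instance X R sm sp \<longleftrightarrow> (\<exists>(Atoms :: nat set) A. sf_instance X R sm sp Atoms A)"

end

theory Submission
  imports Defs
begin

definition lf :: "'x set \<Rightarrow> ('x \<Rightarrow> real) \<Rightarrow> ('x \<Rightarrow> real) \<Rightarrow> real" where
  "lf X c v = (\<Sum>x\<in>X. c x * v x)"

lemma lf_sub: "lf X (\<lambda>x. c x - k * c0 x) v = lf X c v - k * lf X c0 v"
  unfolding lf_def by (simp add: algebra_simps sum_subtractf sum_distrib_left)

lemma lf_upd:
  assumes "finite X" "x0 \<in> X"
  shows "lf X c (q(x0 := v)) = lf X c q - c x0 * q x0 + c x0 * v"
proof -
  have "lf X c (q(x0 := v)) = c x0 * v + (\<Sum>x\<in>X-{x0}. c x * q x)"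
    unfolding lf_def using assms by (simp add: sum.remove)
  moreover have "lf X c q = c x0 * q x0 + (\<Sum>x\<in>X-{x0}. c x * q x)"
    unfolding lf_def using assms by (simp add: sum.remove)
  ultimately show ?thesis by simp
qed

lemma lf_zero_at:
  assumes "finite X" "x0 \<in> X" "c x0 = 0"
  shows "lf X c (q(x0 := v)) = lf X c q"
  using lf_upd[OF assms(1,2)] assms(3) by simp

lemma base_case:
  assumes "finite X" "\<forall>p\<in>set G. lf X (fst p) m > snd p"
  shows "\<exists>q. (\<forall>x. q x \<in> \<rat>) \<and> (\<forall>p\<in>set G. lf X (fst p) q > snd p)"
proof -
  define s where "s p = lf X (fst p) m - snd p" for p :: "('a \<Rightarrow> real) \<times> real"
  define K where "K p = (\<Sum>x\<in>X. \<bar>fst p x\<bar>) + 1" for p :: "('a \<Rightarrow> real) \<times> real"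
  define e where "e = Min (insert 1 ((\<lambda>p. s p / K p) ` set G))"
  have Kpos: "K p > 0" for p
  proof -
    have "(\<Sum>x\<in>X. \<bar>fst p x\<bar>) \<ge> 0" by (simp add: sum_nonneg)
    thus ?thesis unfolding K_def by linarith
  qed
  have spos: "p \<in> set G \<Longrightarrow> s p > 0" for p using assms(2) unfolding s_def by auto
  have epos: "e > 0" unfolding e_def
    using spos Kpos by (subst Min_gr_iff) auto
  have ele: "p \<in> set G \<Longrightarrow> e \<le> s p / K p" for p unfolding e_def
    by (rule Min_le) auto
  have "\<forall>x. \<exists>r. r \<in> \<rat> \<and> m x < r \<and> r < m x + e"
    using Rats_dense_in_real epos by (metis less_add_same_cancel1)
  then obtain q where q: "\<And>x. q x \<in> \<rat> \<and> m x < q x \<and> q x < m x + e" by metis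
  have "lf X (fst p) q > snd p" if p: "p \<in> set G" for p
  proof -
    let ?g = "fst p"
    have "\<bar>lf X ?g q - lf X ?g m\<bar> = \<bar>\<Sum>x\<in>X. ?g x * (q x - m x)\<bar>"
      unfolding lf_def by (simp add: algebra_simps sum_subtractf)
    also have "\<dots> \<le> (\<Sum>x\<in>X. \<bar>?g x * (q x - m x)\<bar>)" by (rule sum_abs)
    also have "\<dots> \<le> (\<Sum>x\<in>X. \<bar>?g x\<bar> * e)"
    proof (rule sum_mono)
      fix x
      have "\<bar>q x - m x\<bar> \<le> e" using q[of x] by auto
      thus "\<bar>?g x * (q x - m x)\<bar> \<le> \<bar>?g x\<bar> * e"
        by (simp add: abs_mult mult_left_mono)
    qed
    also have "\<dots> = e * (K p - 1)" unfolding K_def by (simp add: sum_distrib_left mult.commute)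
    also have "\<dots> < e * K p" using epos by simp
    also have "\<dots> \<le> s p" using ele[OF p] Kpos[of p] by (simp add: pos_le_divide_eq mult.commute)
    finally show ?thesis unfolding s_def by linarith
  qed
  thus ?thesis using q by blast
qed

lemma rat_sol:
  assumes X: "finite X"
  shows "\<forall>E G. length E = n \<longrightarrow>
    (\<forall>p\<in>set E. (\<forall>x. fst p x \<in> \<rat>) \<and> snd p \<in> \<rat>) \<longrightarrow>
    (\<forall>p\<in>set E. lf X (fst p) m = snd p) \<longrightarrow>
    (\<forall>p\<in>set G. lf X (fst p) m > snd p) \<longrightarrow>
    (\<exists>q. (\<forall>x. q x \<in> \<rat>) \<and> (\<forall>p\<in>set E. lf X (fst p) q = snd p) \<and>
         (\<forall>p\<in>set G. lf X (fst p) q > snd p))"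
proof (induction n)
  case 0
  then show ?case using base_case[OF X] by auto
next
  case (Suc n)
  show ?case
  proof (intro allI impI)
    fix E :: "(('a \<Rightarrow> real) \<times> real) list" and G :: "(('a \<Rightarrow> real) \<times> real) list"
    assume len: "length E = Suc n"
      and rat: "\<forall>p\<in>set E. (\<forall>x. fst p x \<in> \<rat>) \<and> snd p \<in> \<rat>"
      and eqs: "\<forall>p\<in>set E. lf X (fst p) m = snd p"
      and ineqs: "\<forall>p\<in>set G. lf X (fst p) m > snd p"
    obtain c0 b0 E' where E: "E = (c0, b0) # E'" using len by (cases E) auto
    have lenE': "length E' = n" using len E by simp
    have c0b0: "lf X c0 m = b0" using eqs E by auto
    show "\<exists>q. (\<forall>x. q x \<in> \<rat>) \<and> (\<forall>p\<in>set E. lf X (fst p) q = snd p) \<and>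
         (\<forall>p\<in>set G. lf X (fst p) q > snd p)"
    proof (cases "\<forall>x\<in>X. c0 x = 0")
      case True
      have lf0: "lf X c0 v = 0" for v unfolding lf_def using True by simp
      obtain q where q: "(\<forall>x. q x \<in> \<rat>) \<and> (\<forall>p\<in>set E'. lf X (fst p) q = snd p) \<and>
         (\<forall>p\<in>set G. lf X (fst p) q > snd p)"
        using Suc.IH[rule_format, of E' G] lenE' rat eqs ineqs E by auto
      have "b0 = 0" using c0b0 lf0 by simp
      then show ?thesis using q E lf0 by auto
    next
      case False
      then obtain x0 where x0: "x0 \<in> X" "c0 x0 \<noteq> 0" by auto
      define sub where "sub p = ((\<lambda>x. fst p x - fst p x0 / c0 x0 * c0 x),
                                 snd p - fst p x0 / c0 x0 * b0)" for p :: "('a \<Rightarrow> real) \<times> real"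
      have sublf: "lf X (fst (sub p)) v = lf X (fst p) v - fst p x0 / c0 x0 * lf X c0 v" for p v
        unfolding sub_def using lf_sub[of X "fst p" "fst p x0 / c0 x0" c0 v] by (simp only: fst_conv)
      have subx0: "fst (sub p) x0 = 0" for p unfolding sub_def using x0 by simp
      have rat0: "(\<forall>x. c0 x \<in> \<rat>) \<and> b0 \<in> \<rat>" using rat E by auto
      have rat': "\<forall>p\<in>set (map sub E'). (\<forall>x. fst p x \<in> \<rat>) \<and> snd p \<in> \<rat>"
        using rat rat0 E unfolding sub_def by auto
      have eqs': "\<forall>p\<in>set (map sub E'). lf X (fst p) m = snd p"
        using eqs E sublf c0b0 unfolding sub_def by auto
      have ineqs': "\<forall>p\<in>set (map sub G). lf X (fst p) m > snd p"
        using ineqs sublf c0b0 unfolding sub_def by auto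
      obtain q where q: "\<forall>x. q x \<in> \<rat>"
        and qe: "\<forall>p\<in>set (map sub E'). lf X (fst p) q = snd p"
        and qi: "\<forall>p\<in>set (map sub G). lf X (fst p) q > snd p"
        using Suc.IH[rule_format, of "map sub E'" "map sub G"] rat' eqs' ineqs' lenE' by auto
      define v where "v = (b0 - (lf X c0 q - c0 x0 * q x0)) / c0 x0"
      define q' where "q' = q(x0 := v)"
      have vrat: "v \<in> \<rat>"
      proof -
        have "lf X c0 q \<in> \<rat>" unfolding lf_def using q rat0 by (auto intro!: Rats_sum)
        thus ?thesis unfolding v_def using q rat0 by auto
      qed
      have q'rat: "\<forall>x. q' x \<in> \<rat>" unfolding q'_def using q vrat by auto
      have q'c0: "lf X c0 q' = b0"
      proof -
        have "lf X c0 q' = lf X c0 q - c0 x0 * q x0 + c0 x0 * v"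
          unfolding q'_def by (rule lf_upd[OF X x0(1)])
        also have "c0 x0 * v = b0 - (lf X c0 q - c0 x0 * q x0)" unfolding v_def using x0(2) by simp
        finally show ?thesis by simp
      qed
      have key: "lf X (fst p) q' = lf X (fst (sub p)) q + fst p x0 / c0 x0 * b0" for p
      proof -
        have "lf X (fst (sub p)) q' = lf X (fst (sub p)) q"
          unfolding q'_def using lf_zero_at[OF X x0(1), of "fst (sub p)", OF subx0] by simp
        moreover have "lf X (fst (sub p)) q' = lf X (fst p) q' - fst p x0 / c0 x0 * b0"
          using sublf q'c0 by simp
        ultimately show ?thesis by simp
      qed
      have "\<forall>p\<in>set E. lf X (fst p) q' = snd p"
      proof
        fix p assume "p \<in> set E"
        then consider "p = (c0, b0)" | "p \<in> set E'" using E by auto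
        then show "lf X (fst p) q' = snd p"
        proof cases
          case 1 then show ?thesis using q'c0 by simp
        next
          case 2
          then have "lf X (fst (sub p)) q = snd (sub p)" using qe by auto
          then show ?thesis using key[of p] unfolding sub_def by simp
        qed
      qed
      moreover have "\<forall>p\<in>set G. lf X (fst p) q' > snd p"
      proof
        fix p assume "p \<in> set G"
        then have "lf X (fst (sub p)) q > snd (sub p)" using qi by auto
        then show "lf X (fst p) q' > snd p" using key[of p] unfolding sub_def by simp
      qed
      ultimately show ?thesis using q'rat by blast
    qed
  qed
qed


lemma rat_conservative:
  fixes m :: "'x \<Rightarrow> real" and S :: "'x \<Rightarrow> 'r \<Rightarrow> int"
  assumes X: "finite X" and R: "finite R"
    and m: "\<forall>x\<in>X. 0 < m x" "\<forall>r\<in>R. (\<Sum>x\<in>X. m x * of_int (S x r)) = 0"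
  shows "\<exists>q :: 'x \<Rightarrow> real. (\<forall>x. q x \<in> \<rat>) \<and> (\<forall>x\<in>X. 0 < q x) \<and>
              (\<forall>r\<in>R. (\<Sum>x\<in>X. q x * of_int (S x r)) = 0)"
proof -
  obtain rs where rs: "set rs = R" using finite_list[OF R] by blast
  obtain xs where xs: "set xs = X" using finite_list[OF X] by blast
  define E where "E = map (\<lambda>r. (\<lambda>x. real_of_int (S x r), 0::real)) rs"
  define G where "G = map (\<lambda>y. (\<lambda>x. if x = y then 1 else 0::real, 0::real)) xs"
  have ind: "y \<in> X \<Longrightarrow> lf X (\<lambda>x. if x = y then 1 else 0) v = v y" for y v
  proof -
    assume y: "y \<in> X"
    have "lf X (\<lambda>x. if x = y then 1 else 0) v = (\<Sum>x\<in>X. if x = y then v x else 0)"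
      unfolding lf_def by (rule sum.cong) auto
    also have "\<dots> = v y" using X y by (simp add: sum.delta)
    finally show ?thesis .
  qed
  have lfS: "lf X (\<lambda>x. real_of_int (S x r)) v = (\<Sum>x\<in>X. v x * of_int (S x r))" for r v
    unfolding lf_def by (simp add: mult.commute)
  have "\<exists>q. (\<forall>x. q x \<in> \<rat>) \<and> (\<forall>p\<in>set E. lf X (fst p) q = snd p) \<and>
         (\<forall>p\<in>set G. lf X (fst p) q > snd p)"
    apply (rule rat_sol[OF X, rule_format, of E "length E" m G])
    using m rs xs ind lfS by (auto simp: E_def G_def)
  then obtain q where q: "\<forall>x. q x \<in> \<rat>" "\<forall>p\<in>set E. lf X (fst p) q = snd p"
         "\<forall>p\<in>set G. lf X (fst p) q > snd p" by blast
  show ?thesis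
    apply (rule exI[of _ q])
    using q rs xs ind lfS by (auto simp: E_def G_def)
qed

lemma nat_conservative:
  fixes q :: "'x \<Rightarrow> real" and S :: "'x \<Rightarrow> 'r \<Rightarrow> int"
  assumes X: "finite X"
    and q: "\<forall>x. q x \<in> \<rat>" "\<forall>x\<in>X. 0 < q x" "\<forall>r\<in>R. (\<Sum>x\<in>X. q x * of_int (S x r)) = 0"
  shows "\<exists>N :: 'x \<Rightarrow> nat. (\<forall>x\<in>X. 0 < N x) \<and> (\<forall>r\<in>R. (\<Sum>x\<in>X. int (N x) * S x r) = 0)"
proof -
  have "\<forall>x. \<exists>a b. b > 0 \<and> q x = of_int a / of_int b"
  proof
    fix x
    from q(1) obtain a b where "q x = of_int a / of_int b" "b > (0::int)"
      using Rats_cases' by (metis)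
    thus "\<exists>a b. b > 0 \<and> q x = of_int a / of_int b" by blast
  qed
  then obtain a b where ab: "\<And>x. b x > (0::int) \<and> q x = of_int (a x) / of_int (b x)" by metis
  define D where "D = (\<Prod>x\<in>X. b x)"
  define M where "M x = a x * (\<Prod>y\<in>X-{x}. b y)" for x
  have Dpos: "D > 0" unfolding D_def using ab by (simp add: prod_pos)
  have MD: "x \<in> X \<Longrightarrow> real_of_int (M x) = q x * real_of_int D" for x
  proof -
    assume x: "x \<in> X"
    have "D = b x * (\<Prod>y\<in>X-{x}. b y)" unfolding D_def using X x by (simp add: prod.remove)
    then show ?thesis unfolding M_def using ab[of x] by simp
  qed
  have Mpos: "x \<in> X \<Longrightarrow> M x > 0" for x
  proof -
    assume "x \<in> X"
    then have "real_of_int (M x) > 0" using MD q(2) Dpos by simp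
    then show ?thesis by simp
  qed
  define N where "N x = nat (M x)" for x
  have NM: "x \<in> X \<Longrightarrow> int (N x) = M x" for x unfolding N_def using Mpos by force
  have "(\<Sum>x\<in>X. int (N x) * S x r) = 0" if r: "r \<in> R" for r
  proof -
    have "real_of_int (\<Sum>x\<in>X. int (N x) * S x r) = (\<Sum>x\<in>X. real_of_int (M x) * of_int (S x r))"
      using NM by simp
    also have "\<dots> = (\<Sum>x\<in>X. q x * of_int (S x r)) * real_of_int D"
      using MD by (simp add: sum_distrib_right sum_distrib_left mult_ac)
    also have "\<dots> = 0" using q(3) r by simp
    finally show ?thesis by linarith
  qed
  moreover have "\<forall>x\<in>X. 0 < N x" using Mpos unfolding N_def by simp
  ultimately show ?thesis by blast
qed

theorem proposition8:
  fixes X :: "'x set" and R :: "'r set" and sm sp :: "'x \<Rightarrow> 'r \<Rightarrow> nat"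
  assumes "reaction_network X R"
    and "closed_RN X R sm sp"
  shows "admits_sf_instance X R sm sp \<longleftrightarrow> conservative X R sm sp"
proof
  assume "admits_sf_instance X R sm sp"
  then obtain Atoms :: "nat set" and A where sf: "sf_instance X R sm sp Atoms A"
    unfolding admits_sf_instance_def by blast
  define m where "m x = (\<Sum>a\<in>Atoms. real (A a x))" for x
  have fin: "finite Atoms" using sf unfolding sf_instance_def by blast
  have "0 < m x" if x: "x \<in> X" for x
  proof -
    obtain a where a: "a \<in> Atoms" "A a x \<noteq> 0" using sf x unfolding sf_instance_def by blast
    have "real (A a x) \<le> m x" unfolding m_def
      using member_le_sum[of a Atoms "\<lambda>a. real (A a x)"] a fin by simp
    moreover have "real (A a x) > 0" using a by simp
    ultimately show ?thesis by linarith
  qed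
  moreover have "(\<Sum>x\<in>X. m x * of_int (stoich sm sp x r)) = 0" if r: "r \<in> R" for r
  proof -
    have "(\<Sum>x\<in>X. m x * of_int (stoich sm sp x r)) =
          (\<Sum>a\<in>Atoms. real_of_int (\<Sum>x\<in>X. int (A a x) * stoich sm sp x r))"
      unfolding m_def by (simp add: sum_distrib_right sum.swap[of _ X Atoms])
    also have "\<dots> = 0" using sf r unfolding sf_instance_def by simp
    finally show ?thesis .
  qed
  ultimately show "conservative X R sm sp" unfolding conservative_def by blast
next
  assume "conservative X R sm sp"
  then obtain m :: "'x \<Rightarrow> real" where m: "\<forall>x\<in>X. 0 < m x"
    "\<forall>r\<in>R. (\<Sum>x\<in>X. m x * of_int (stoich sm sp x r)) = 0"
    unfolding conservative_def by blast
  have X: "finite X" and R: "finite R" using assms(1) unfolding reaction_network_def by auto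
  obtain q :: "'x \<Rightarrow> real" where q: "\<forall>x. q x \<in> \<rat>" "\<forall>x\<in>X. 0 < q x"
    "\<forall>r\<in>R. (\<Sum>x\<in>X. q x * of_int (stoich sm sp x r)) = 0"
    using rat_conservative[OF X R m] by blast
  obtain N :: "'x \<Rightarrow> nat" where N: "\<forall>x\<in>X. 0 < N x"
    "\<forall>r\<in>R. (\<Sum>x\<in>X. int (N x) * stoich sm sp x r) = 0"
    using nat_conservative[OF X q] by blast
  have "sf_instance X R sm sp {0::nat} (\<lambda>a x. N x)"
    unfolding sf_instance_def using N by auto
  then show "admits_sf_instance X R sm sp" unfolding admits_sf_instance_def by blast
qed

end
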